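(* Let $X$ be a smooth complex algebraic variety with local coordinates $x_1,\dots,x_n$, $f_1,\dots,f_r\in\mathcal{O}_X(X)$, $g=\sum_{i=1}^r y_if_i$ on $X\times\mathbf A^r_y$, and $\mathcal{M}$ a left $\mathcal{D}_X$-module (underlying a mixed Hodge module). Define $\varphi\colon\mathcal{M}_g\to\Gamma_+(\mathcal{M})$ as the unique $\mathcal{O}_X$-linear map with \[ \varphi(m\,y^\alpha\partial_\xi^j\delta_g)=(-1)^{|\alpha|+j}m\,\partial_t^\alpha\delta_f\quad(m\in\mathcal{M},\alpha\in\mathbf N^r,j\in\mathbf Z). \] Then: (1) $\varphi$ is $\mathcal{D}_X$-linear; (2) $\varphi\circ\partial_\xi^k=(-1)^k\varphi$ for all $k\in\mathbf Z$; (3) $\varphi\circ y_i=-\partial_{t_i}\circ\varphi$ for all $i$; (4) $\varphi\circ\partial_{y_i}=t_i\circ\varphi$ for all $i$; (5) $\varphi\circ\theta_y=s\circ\varphi$; (6) for every $\ell\in\mathbf Z$, $\varphi|_{E^{(\ell)}}$ is an isomorphism onto $\Gamma_+(\mathcal{M})$ and satisfies $\varphi\circ s=(s-\ell)\circ\varphi$.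
   Context: $\Gamma_+(\mathcal{M})=\bigoplus_{\alpha\in\mathbf N^r}\mathcal{M}\partial_t^\alpha\delta_f$ is the pushforward along the graph $X\to X\times\mathbf A^r_t$ of $(f_1,\dots,f_r)$, with $h(m\partial_t^\alpha\delta_f)=hm\partial_t^\alpha\delta_f$, $\partial_{x_i}(m\partial_t^\alpha\delta_f)=\partial_{x_i}(m)\partial_t^\alpha\delta_f-\sum_j\partial_{x_i}(f_j)m\partial_t^{\alpha+e_j}\delta_f$, $t_i(m\partial_t^\alpha\delta_f)=f_im\partial_t^\alpha\delta_f-\alpha_im\partial_t^{\alpha-e_i}\delta_f$, $\partial_{t_i}(m\partial_t^\alpha\delta_f)=m\partial_t^{\alpha+e_i}\delta_f$; on it $s=-\sum_i\partial_{t_i}t_i$. $\mathcal{M}_g=\mathcal{M}[y_1,\dots,y_r,\partial_\xi^{\pm1}]\delta_g$ is the partial microlocalization of the graph pushforward of $\mathcal{M}[y_1,\dots,y_r]$ along $g$ into $X\times\mathbf A^r_y\times\mathbf A^1_\xi$, with actions: $h\in\mathcal{O}_X$ by multiplication on $m$; $\partial_{x_i}(my^\alpha\partial_\xi^j\delta_g)=\partial_{x_i}(m)y^\alpha\partial_\xi^j\delta_g-\big(\sum_\ell\partial_{x_i}(f_\ell)my^{\alpha+e_\ell}\big)\partial_\xi^{j+1}\delta_g$; $y_i$ by multiplication; $\partial_{y_i}(my^\alpha\partial_\xi^j\delta_g)=\alpha_imy^{\alpha-e_i}\partial_\xi^j\delta_g-f_imy^\alpha\partial_\xi^{j+1}\delta_g$;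 $\partial_\xi(my^\alpha\partial_\xi^j\delta_g)=my^\alpha\partial_\xi^{j+1}\delta_g$; $\xi(my^\alpha\partial_\xi^j\delta_g)=gmy^\alpha\partial_\xi^j\delta_g-jmy^\alpha\partial_\xi^{j-1}\delta_g$. On it $s=-\partial_\xi\xi$ and $\theta_y=\sum_iy_i\partial_{y_i}$. For $\ell\in\mathbf Z$, $E^{(\ell)}=\ker(\theta_y-s-\ell)=\bigoplus_{|\alpha|=j+\ell}\mathcal{M}y^\alpha\partial_\xi^j\delta_g$, so $\mathcal{M}_g=\bigoplus_\ell E^{(\ell)}$. *)

theory Defs
  imports Main "HOL-Library.Function_Algebras"
begin

text \<open>The ring of functions O_X is a commutative
ring 'r with commuting derivations dO i (i < n) standing for the coordinate vector fields
d/dx_i; the left D_X-module M is an abelian group 'm with an O_X-action sm and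
commuting operators dM i satisfying the Leibniz rule.\<close>

definition Dmod :: "nat \<Rightarrow> ('r::comm_ring_1 \<Rightarrow> 'm::ab_group_add \<Rightarrow> 'm)
     \<Rightarrow> (nat \<Rightarrow> 'r \<Rightarrow> 'r) \<Rightarrow> (nat \<Rightarrow> 'm \<Rightarrow> 'm) \<Rightarrow> bool" where
  "Dmod n sm dO dM \<longleftrightarrow>
     (\<forall>m. sm 1 m = m) \<and>
     (\<forall>a b m. sm (a * b) m = sm a (sm b m)) \<and>
     (\<forall>a b m. sm (a + b) m = sm a m + sm b m) \<and>
     (\<forall>a m m'. sm a (m + m') = sm a m + sm a m') \<and>
     (\<forall>i<n. \<forall>a b. dO i (a + b) = dO i a + dO i b) \<and>
     (\<forall>i<n. \<forall>a b. dO i (a * b) = dO i a * b + a * dO i b) \<and>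
     (\<forall>i<n. \<forall>j<n. \<forall>a. dO i (dO j a) = dO j (dO i a)) \<and>
     (\<forall>i<n. \<forall>m m'. dM i (m + m') = dM i m + dM i m') \<and>
     (\<forall>i<n. \<forall>a m. dM i (sm a m) = sm (dO i a) m + sm a (dM i m)) \<and>
     (\<forall>i<n. \<forall>j<n. \<forall>m. dM i (dM j m) = dM j (dM i m))"

text \<open>Finitely supported sums.  An element of a direct sum indexed by 'i is a function
'i \<Rightarrow> 'm with finite support; mono_el a m is the element m placed at index a.\<close>

definition fsupp :: "('i \<Rightarrow> 'm::zero) \<Rightarrow> 'i set" where
  "fsupp F = {a. F a \<noteq> 0}"

definition mono_el :: "'i \<Rightarrow> 'm \<Rightarrow> 'i \<Rightarrow> 'm::zero" where
  "mono_el a m = (\<lambda>b. if b = a then m else 0)"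

definition lin_ext :: "('i \<Rightarrow> 'm::zero \<Rightarrow> 'k \<Rightarrow> 'n::comm_monoid_add) \<Rightarrow> ('i \<Rightarrow> 'm) \<Rightarrow> 'k \<Rightarrow> 'n" where
  "lin_ext op F = (\<Sum>a\<in>fsupp F. op a (F a))"

text \<open>Multi-indices alpha in N^r are functions nat \<Rightarrow> nat vanishing from r on.\<close>
definition multi_idx :: "nat \<Rightarrow> (nat \<Rightarrow> nat) set" where
  "multi_idx r = {\<alpha>. \<forall>i\<ge>r. \<alpha> i = 0}"

definition msize :: "nat \<Rightarrow> (nat \<Rightarrow> nat) \<Rightarrow> nat" where
  "msize r \<alpha> = (\<Sum>i<r. \<alpha> i)"

definition incr :: "(nat \<Rightarrow> nat) \<Rightarrow> nat \<Rightarrow> nat \<Rightarrow> nat" where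
  "incr \<alpha> i = \<alpha>(i := \<alpha> i + 1)"

definition decr :: "(nat \<Rightarrow> nat) \<Rightarrow> nat \<Rightarrow> nat \<Rightarrow> nat" where
  "decr \<alpha> i = \<alpha>(i := \<alpha> i - 1)"

section \<open>Gamma_+(M) = direct sum over alpha of M d_t^alpha delta_f\<close>

definition Gam :: "nat \<Rightarrow> ((nat \<Rightarrow> nat) \<Rightarrow> 'm::zero) set" where
  "Gam r = {G. finite (fsupp G) \<and> fsupp G \<subseteq> multi_idx r}"

definition gam_h :: "('r \<Rightarrow> 'm \<Rightarrow> 'm::ab_group_add) \<Rightarrow> 'r \<Rightarrow> ((nat \<Rightarrow> nat) \<Rightarrow> 'm) \<Rightarrow> (nat \<Rightarrow> nat) \<Rightarrow> 'm" where
  "gam_h sm h = lin_ext (\<lambda>\<alpha> m. mono_el \<alpha> (sm h m))"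

definition gam_dx :: "('r \<Rightarrow> 'm \<Rightarrow> 'm::ab_group_add) \<Rightarrow> (nat \<Rightarrow> 'r \<Rightarrow> 'r) \<Rightarrow> (nat \<Rightarrow> 'm \<Rightarrow> 'm)
    \<Rightarrow> (nat \<Rightarrow> 'r) \<Rightarrow> nat \<Rightarrow> nat \<Rightarrow> ((nat \<Rightarrow> nat) \<Rightarrow> 'm) \<Rightarrow> (nat \<Rightarrow> nat) \<Rightarrow> 'm" where
  "gam_dx sm dO dM f r i = lin_ext (\<lambda>\<alpha> m.
      mono_el \<alpha> (dM i m) - (\<Sum>j<r. mono_el (incr \<alpha> j) (sm (dO i (f j)) m)))"

definition gam_t :: "('r::comm_ring_1 \<Rightarrow> 'm \<Rightarrow> 'm::ab_group_add) \<Rightarrow> (nat \<Rightarrow> 'r) \<Rightarrow> nat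
    \<Rightarrow> ((nat \<Rightarrow> nat) \<Rightarrow> 'm) \<Rightarrow> (nat \<Rightarrow> nat) \<Rightarrow> 'm" where
  "gam_t sm f i = lin_ext (\<lambda>\<alpha> m.
      mono_el \<alpha> (sm (f i) m) - mono_el (decr \<alpha> i) (sm (of_nat (\<alpha> i)) m))"

definition gam_dt :: "nat \<Rightarrow> ((nat \<Rightarrow> nat) \<Rightarrow> 'm::ab_group_add) \<Rightarrow> (nat \<Rightarrow> nat) \<Rightarrow> 'm" where
  "gam_dt i = lin_ext (\<lambda>\<alpha> m. mono_el (incr \<alpha> i) m)"

definition gam_s :: "('r::comm_ring_1 \<Rightarrow> 'm \<Rightarrow> 'm::ab_group_add) \<Rightarrow> (nat \<Rightarrow> 'r) \<Rightarrow> nat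
    \<Rightarrow> ((nat \<Rightarrow> nat) \<Rightarrow> 'm) \<Rightarrow> (nat \<Rightarrow> nat) \<Rightarrow> 'm" where
  "gam_s sm f r G = - (\<Sum>i<r. gam_dt i (gam_t sm f i G))"

section \<open>M_g = direct sum over (alpha, j) in N^r x Z of M y^alpha d_xi^j delta_g\<close>

definition Mg :: "nat \<Rightarrow> ((nat \<Rightarrow> nat) \<times> int \<Rightarrow> 'm::zero) set" where
  "Mg r = {F. finite (fsupp F) \<and> fst ` fsupp F \<subseteq> multi_idx r}"

definition mg_h :: "('r \<Rightarrow> 'm \<Rightarrow> 'm::ab_group_add) \<Rightarrow> 'r \<Rightarrow> ((nat \<Rightarrow> nat) \<times> int \<Rightarrow> 'm) \<Rightarrow> (nat \<Rightarrow> nat) \<times> int \<Rightarrow> 'm" where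
  "mg_h sm h = lin_ext (\<lambda>a m. mono_el a (sm h m))"

definition mg_dx :: "('r \<Rightarrow> 'm \<Rightarrow> 'm::ab_group_add) \<Rightarrow> (nat \<Rightarrow> 'r \<Rightarrow> 'r) \<Rightarrow> (nat \<Rightarrow> 'm \<Rightarrow> 'm)
    \<Rightarrow> (nat \<Rightarrow> 'r) \<Rightarrow> nat \<Rightarrow> nat \<Rightarrow> ((nat \<Rightarrow> nat) \<times> int \<Rightarrow> 'm) \<Rightarrow> (nat \<Rightarrow> nat) \<times> int \<Rightarrow> 'm" where
  "mg_dx sm dO dM f r i = lin_ext (\<lambda>(\<alpha>, j) m.
      mono_el (\<alpha>, j) (dM i m) - (\<Sum>l<r. mono_el (incr \<alpha> l, j + 1) (sm (dO i (f l)) m)))"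

definition mg_y :: "nat \<Rightarrow> ((nat \<Rightarrow> nat) \<times> int \<Rightarrow> 'm::ab_group_add) \<Rightarrow> (nat \<Rightarrow> nat) \<times> int \<Rightarrow> 'm" where
  "mg_y i = lin_ext (\<lambda>(\<alpha>, j) m. mono_el (incr \<alpha> i, j) m)"

definition mg_dy :: "('r::comm_ring_1 \<Rightarrow> 'm \<Rightarrow> 'm::ab_group_add) \<Rightarrow> (nat \<Rightarrow> 'r) \<Rightarrow> nat
    \<Rightarrow> ((nat \<Rightarrow> nat) \<times> int \<Rightarrow> 'm) \<Rightarrow> (nat \<Rightarrow> nat) \<times> int \<Rightarrow> 'm" where
  "mg_dy sm f i = lin_ext (\<lambda>(\<alpha>, j) m.
      mono_el (decr \<alpha> i, j) (sm (of_nat (\<alpha> i)) m) - mono_el (\<alpha>, j + 1) (sm (f i) m))"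

definition mg_dxi :: "((nat \<Rightarrow> nat) \<times> int \<Rightarrow> 'm::ab_group_add) \<Rightarrow> (nat \<Rightarrow> nat) \<times> int \<Rightarrow> 'm" where
  "mg_dxi = lin_ext (\<lambda>(\<alpha>, j) m. mono_el (\<alpha>, j + 1) m)"

text \<open>The inverse of d_xi (it exists on the microlocalization).\<close>
definition mg_dxi_inv :: "((nat \<Rightarrow> nat) \<times> int \<Rightarrow> 'm::ab_group_add) \<Rightarrow> (nat \<Rightarrow> nat) \<times> int \<Rightarrow> 'm" where
  "mg_dxi_inv = lin_ext (\<lambda>(\<alpha>, j) m. mono_el (\<alpha>, j - 1) m)"

definition mg_dxi_pow :: "int \<Rightarrow> ((nat \<Rightarrow> nat) \<times> int \<Rightarrow> 'm::ab_group_add) \<Rightarrow> (nat \<Rightarrow> nat) \<times> int \<Rightarrow> 'm" where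
  "mg_dxi_pow k = (if 0 \<le> k then mg_dxi ^^ nat k else mg_dxi_inv ^^ nat (- k))"

definition mg_xi :: "('r::comm_ring_1 \<Rightarrow> 'm \<Rightarrow> 'm::ab_group_add) \<Rightarrow> (nat \<Rightarrow> 'r) \<Rightarrow> nat
    \<Rightarrow> ((nat \<Rightarrow> nat) \<times> int \<Rightarrow> 'm) \<Rightarrow> (nat \<Rightarrow> nat) \<times> int \<Rightarrow> 'm" where
  "mg_xi sm f r = lin_ext (\<lambda>(\<alpha>, j) m.
      (\<Sum>l<r. mono_el (incr \<alpha> l, j) (sm (f l) m)) - mono_el (\<alpha>, j - 1) (sm (of_int j) m))"

definition mg_s :: "('r::comm_ring_1 \<Rightarrow> 'm \<Rightarrow> 'm::ab_group_add) \<Rightarrow> (nat \<Rightarrow> 'r) \<Rightarrow> nat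
    \<Rightarrow> ((nat \<Rightarrow> nat) \<times> int \<Rightarrow> 'm) \<Rightarrow> (nat \<Rightarrow> nat) \<times> int \<Rightarrow> 'm" where
  "mg_s sm f r F = - mg_dxi (mg_xi sm f r F)"

definition mg_theta :: "('r::comm_ring_1 \<Rightarrow> 'm \<Rightarrow> 'm::ab_group_add) \<Rightarrow> (nat \<Rightarrow> 'r) \<Rightarrow> nat
    \<Rightarrow> ((nat \<Rightarrow> nat) \<times> int \<Rightarrow> 'm) \<Rightarrow> (nat \<Rightarrow> nat) \<times> int \<Rightarrow> 'm" where
  "mg_theta sm f r F = (\<Sum>i<r. mg_y i (mg_dy sm f i F))"

definition Eell :: "nat \<Rightarrow> int \<Rightarrow> ((nat \<Rightarrow> nat) \<times> int \<Rightarrow> 'm::zero) set" where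
  "Eell r l = {F \<in> Mg r. \<forall>(\<alpha>, j) \<in> fsupp F. int (msize r \<alpha>) = j + l}"

definition phi :: "nat \<Rightarrow> ((nat \<Rightarrow> nat) \<times> int \<Rightarrow> 'm::ab_group_add) \<Rightarrow> (nat \<Rightarrow> nat) \<Rightarrow> 'm" where
  "phi r = lin_ext (\<lambda>(\<alpha>, j) m.
      mono_el \<alpha> (if even (int (msize r \<alpha>) + j) then m else - m))"

end

theory Submission
  imports Defs
begin


definition fin :: "('i \<Rightarrow> 'm::zero) \<Rightarrow> bool" where "fin F = finite (fsupp F)"

definition addop :: "('i \<Rightarrow> 'm::ab_group_add \<Rightarrow> 'k \<Rightarrow> 'n::ab_group_add) \<Rightarrow> bool" where
  "addop op = (\<forall>a x y. op a (x + y) = op a x + op a y)"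

lemma sum_fun_apply: "(\<Sum>x\<in>A. H x) y = (\<Sum>x\<in>A. H x y)"
  by (induction A rule: infinite_finite_induct) auto

lemma fin_zero[simp]: "fin (0::'i \<Rightarrow> 'm::zero)" by (simp add: fin_def fsupp_def)
lemma fin_add[simp]: "fin F \<Longrightarrow> fin G \<Longrightarrow> fin (F + (G::'i \<Rightarrow> 'm::monoid_add))"
  unfolding fin_def by (rule finite_subset[of _ "fsupp F \<union> fsupp G"]) (auto simp: fsupp_def)
lemma fin_uminus[simp]: "fin (- (F::'i \<Rightarrow> 'm::group_add)) = fin F"
  unfolding fin_def fsupp_def by simp
lemma fin_diff[simp]: "fin F \<Longrightarrow> fin G \<Longrightarrow> fin (F - (G::'i \<Rightarrow> 'm::group_add))"
  using fin_add[of F "-G"] by (simp only: diff_conv_add_uminus fin_uminus)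
lemma fin_sum[simp]: "(\<And>x. x \<in> A \<Longrightarrow> fin (H x)) \<Longrightarrow> fin (\<Sum>x\<in>A. (H x :: 'i \<Rightarrow> 'm::comm_monoid_add))"
  by (induction A rule: infinite_finite_induct) auto
lemma fin_mono_el[simp]: "fin (mono_el a m)"
  unfolding fin_def fsupp_def mono_el_def by (rule finite_subset[of _ "{a}"]) auto

lemma mono_el_add: "mono_el a (x + y) = mono_el a x + (mono_el a y :: _ \<Rightarrow> 'm::monoid_add)"
  by (auto simp: mono_el_def)
lemma mono_el_zero[simp]: "mono_el a 0 = 0"
  by (auto simp: mono_el_def)
lemma mono_el_uminus: "mono_el a (- x) = - (mono_el a x :: _ \<Rightarrow> 'm::group_add)"
  by (auto simp: mono_el_def)
lemma mono_el_diff: "mono_el a (x - y) = mono_el a x - (mono_el a y :: _ \<Rightarrow> 'm::group_add)"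
  by (auto simp: mono_el_def)
lemma mono_el_sum: "mono_el a (\<Sum>x\<in>A. H x) = (\<Sum>x\<in>A. mono_el a (H x) :: _ \<Rightarrow> 'm::comm_monoid_add)"
  by (induction A rule: infinite_finite_induct) (auto simp: mono_el_add)

lemma addop_zero: "addop op \<Longrightarrow> op a 0 = 0"
proof -
  assume "addop op"
  then have "op a (0 + 0) = op a 0 + op a 0" unfolding addop_def by blast
  then show ?thesis by simp
qed

lemma addop_uminus: "addop op \<Longrightarrow> op a (- x) = - op a x"
proof -
  assume A: "addop op"
  then have "op a (x + - x) = op a x + op a (- x)" unfolding addop_def by blast
  then show ?thesis using addop_zero[OF A] by (simp add: eq_neg_iff_add_eq_0 add.commute)
qed

lemma lin_ext_superset:
  assumes "finite S" "fsupp F \<subseteq> S" "\<And>a. op a 0 = 0"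
  shows "lin_ext op F = (\<Sum>a\<in>S. op a (F a))"
  unfolding lin_ext_def
  by (rule sum.mono_neutral_left) (use assms in \<open>auto simp: fsupp_def\<close>)

lemma lin_ext_zero[simp]: "lin_ext op 0 = 0"
  by (simp add: lin_ext_def fsupp_def)

lemma lin_ext_zero'[simp]: "lin_ext op (\<lambda>a. 0) = 0"
  by (simp add: lin_ext_def fsupp_def)

lemma lin_ext_add:
  assumes "addop op" "fin F" "fin G"
  shows "lin_ext op (F + G) = lin_ext op F + lin_ext op G"
proof -
  let ?S = "fsupp F \<union> fsupp G"
  have fS: "finite ?S" using assms by (simp add: fin_def)
  have z: "\<And>a. op a 0 = 0" using addop_zero[OF assms(1)] .
  have "lin_ext op (F + G) = (\<Sum>a\<in>?S. op a ((F + G) a))"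
    by (rule lin_ext_superset[of ?S]) (use fS z in \<open>auto simp: fsupp_def\<close>)
  also have "\<dots> = (\<Sum>a\<in>?S. op a (F a)) + (\<Sum>a\<in>?S. op a (G a))"
    using assms(1) by (simp add: addop_def sum.distrib)
  also have "(\<Sum>a\<in>?S. op a (F a)) = lin_ext op F"
    by (rule lin_ext_superset[of ?S, symmetric]) (use fS z in auto)
  also have "(\<Sum>a\<in>?S. op a (G a)) = lin_ext op G"
    by (rule lin_ext_superset[of ?S, symmetric]) (use fS z in auto)
  finally show ?thesis .
qed

lemma lin_ext_uminus:
  assumes "addop op"
  shows "lin_ext op (- F) = - lin_ext op F"
proof -
  have "fsupp (- F) = fsupp F" by (simp add: fsupp_def)
  then show ?thesis unfolding lin_ext_def
    by (simp add: addop_uminus[OF assms] sum_negf)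
qed

lemma lin_ext_diff:
  assumes "addop op" "fin F" "fin G"
  shows "lin_ext op (F - G) = lin_ext op F - lin_ext op G"
  using lin_ext_add[OF assms(1,2), of "-G"] assms lin_ext_uminus[OF assms(1), of G]
  by (simp only: diff_conv_add_uminus fin_uminus)

lemma lin_ext_sum:
  assumes "addop op" "\<And>x. x \<in> A \<Longrightarrow> fin (H x)"
  shows "lin_ext op (\<Sum>x\<in>A. H x) = (\<Sum>x\<in>A. lin_ext op (H x))"
  using assms(2)
  by (induction A rule: infinite_finite_induct) (auto simp: lin_ext_add[OF assms(1)])

lemma lin_ext_mono:
  assumes "addop op"
  shows "lin_ext op (mono_el a m) = op a m"
proof -
  have "lin_ext op (mono_el a m) = (\<Sum>b\<in>{a}. op b (mono_el a m b))"
    by (rule lin_ext_superset) (auto simp: fsupp_def mono_el_def addop_zero[OF assms])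
  then show ?thesis by (simp add: mono_el_def)
qed

lemma fin_lin_ext[simp]: "(\<And>a m. fin (op a m)) \<Longrightarrow> fin (lin_ext op F)"
  unfolding lin_ext_def by simp

lemma P_sum:
  assumes "\<And>F G. fin F \<Longrightarrow> fin G \<Longrightarrow> P (F + G) = P F + P G" "P 0 = 0"
    "\<And>x. x \<in> A \<Longrightarrow> fin (H x)"
  shows "P (\<Sum>x\<in>A. H x) = (\<Sum>x\<in>A. P (H x))"
  using assms(3)
  by (induction A rule: infinite_finite_induct) (auto simp: assms(1,2))

lemma lin_ext_comp:
  assumes "\<And>F G. fin F \<Longrightarrow> fin G \<Longrightarrow> P (F + G) = P F + P G" "P 0 = 0"
    "\<And>a m. fin (op a m)"
  shows "P (lin_ext op F) = lin_ext (\<lambda>a m. P (op a m)) F"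
  unfolding lin_ext_def by (rule P_sum[OF assms(1,2)]) (use assms(3) in auto)

lemma lin_ext_comp2:
  assumes "addop op'" "\<And>a m. fin (op a m)"
  shows "lin_ext op' (lin_ext op F) = lin_ext (\<lambda>a m. lin_ext op' (op a m)) F"
  by (rule lin_ext_comp[where P="lin_ext op'"], erule (1) lin_ext_add[OF assms(1)], simp, rule assms(2))

lemma lin_ext_cong_supp:
  "(\<And>a. a \<in> fsupp F \<Longrightarrow> op a (F a) = op' a (F a)) \<Longrightarrow> lin_ext op F = lin_ext op' F"
  unfolding lin_ext_def by (rule sum.cong) auto

lemma lin_ext_cong:
  "(\<And>a m. op a m = op' a m) \<Longrightarrow> lin_ext op F = lin_ext op' F"
  unfolding lin_ext_def by simp



definition sg :: "bool \<Rightarrow> 'm::ab_group_add \<Rightarrow> 'm" where "sg e m = (if e then m else - m)"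

lemma sg_add: "sg e (x + y) = sg e x + sg e y" by (simp add: sg_def)
lemma sg_zero[simp]: "sg e 0 = 0" by (simp add: sg_def)
lemma sg_sg[simp]: "sg e (sg e x) = x" by (simp add: sg_def)
lemma sg_eq0[simp]: "(sg e x = 0) = (x = 0)" by (simp add: sg_def)
lemma sg_neg: "sg (\<not> e) x = - sg e x" by (simp add: sg_def)
lemma sg_True[simp]: "sg True x = x" by (simp add: sg_def)

lemma msize_incr: "l < r \<Longrightarrow> msize r (incr \<alpha> l) = Suc (msize r \<alpha>)"
proof -
  assume l: "l < r"
  have "msize r (incr \<alpha> l) = (\<Sum>i<r. \<alpha> i + (if i = l then 1 else 0))"
    unfolding msize_def incr_def by (rule sum.cong) auto
  also have "\<dots> = msize r \<alpha> + 1" using l by (simp add: sum.distrib msize_def)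
  finally show ?thesis by simp
qed

lemma incr_decr: "0 < \<alpha> l \<Longrightarrow> incr (decr \<alpha> l) l = \<alpha>"
  by (auto simp: incr_def decr_def)

lemma msize_decr: "l < r \<Longrightarrow> 0 < \<alpha> l \<Longrightarrow> Suc (msize r (decr \<alpha> l)) = msize r \<alpha>"
  using msize_incr[of l r "decr \<alpha> l"] incr_decr[of \<alpha> l] by simp

definition phop :: "nat \<Rightarrow> (nat \<Rightarrow> nat) \<times> int \<Rightarrow> 'm::ab_group_add \<Rightarrow> (nat \<Rightarrow> nat) \<Rightarrow> 'm" where
  "phop r a m = mono_el (fst a) (sg (even (int (msize r (fst a)) + snd a)) m)"

lemma phi_eq: "phi r = lin_ext (phop r)"
  unfolding phi_def phop_def sg_def by (rule ext, rule lin_ext_cong) (auto split: prod.split)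

lemma addop_phop: "addop (phop r)"
  by (simp add: addop_def phop_def sg_add mono_el_add)

lemma phi_add: "fin F \<Longrightarrow> fin G \<Longrightarrow> phi r (F + G) = phi r F + phi r G"
  by (simp only: phi_eq lin_ext_add[OF addop_phop])
lemma phi_zero[simp]: "phi r 0 = 0"
  by (simp only: phi_eq lin_ext_zero)
lemma phi_uminus: "phi r (- F) = - phi r F"
  by (simp only: phi_eq lin_ext_uminus[OF addop_phop])
lemma phi_diff: "fin F \<Longrightarrow> fin G \<Longrightarrow> phi r (F - G) = phi r F - phi r G"
  by (simp only: phi_eq lin_ext_diff[OF addop_phop])
lemma phi_sum: "(\<And>x. x \<in> A \<Longrightarrow> fin (H x)) \<Longrightarrow> phi r (\<Sum>x\<in>A. H x) = (\<Sum>x\<in>A. phi r (H x))"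
  by (simp only: phi_eq lin_ext_sum[OF addop_phop])
lemma phi_mono: "phi r (mono_el (\<alpha>, j) m) = mono_el \<alpha> (sg (even (int (msize r \<alpha>) + j)) m)"
  by (simp add: phi_eq lin_ext_mono[OF addop_phop] phop_def)
lemma fin_phi[simp]: "fin (phi r F)"
  by (simp add: phi_eq phop_def)

lemma phi_comp:
  assumes "\<And>a m. fin (op a m)"
  shows "phi r (lin_ext op F) = lin_ext (\<lambda>a m. phi r (op a m)) F"
  by (rule lin_ext_comp[where P="phi r"]) (simp_all add: phi_add assms)

lemma phi_lin: "phi r F = lin_ext (phop r) F" by (simp add: phi_eq)



lemma phi_E_apply:
  assumes F: "F \<in> Eell r l"
  shows "phi r F \<alpha> = sg (even l) (F (\<alpha>, int (msize r \<alpha>) - l))"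
proof -
  define j0 where "j0 = int (msize r \<alpha>) - l"
  have "phi r F \<alpha> = (\<Sum>a\<in>fsupp F. phop r a (F a) \<alpha>)"
    by (simp add: phi_lin lin_ext_def sum_fun_apply)
  also have "\<dots> = (\<Sum>a\<in>fsupp F. if a = (\<alpha>, j0) then sg (even l) (F a) else 0)"
  proof (rule sum.cong)
    fix a assume a: "a \<in> fsupp F"
    obtain \<beta> j where aa: "a = (\<beta>, j)" by (cases a)
    have j: "int (msize r \<beta>) = j + l" using F a aa by (auto simp: Eell_def)
    show "phop r a (F a) \<alpha> = (if a = (\<alpha>, j0) then sg (even l) (F a) else 0)"
    proof (cases "\<beta> = \<alpha>")
      case True
      have "even (int (msize r \<beta>) + j) = even l"
      proof -
        have "int (msize r \<beta>) + j = 2 * j + l" using j by simp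
        then show ?thesis by simp
      qed
      then show ?thesis using True j by (simp add: aa phop_def mono_el_def j0_def)
    qed (simp add: aa phop_def mono_el_def)
  qed simp
  also have "\<dots> = sg (even l) (F (\<alpha>, j0))"
  proof -
    have fin: "finite (fsupp F)" using F by (simp add: Eell_def Mg_def)
    show ?thesis by (simp only: sum.delta[OF fin]) (simp add: fsupp_def)
  qed
  finally show ?thesis by (simp add: j0_def)
qed

definition psi :: "nat \<Rightarrow> int \<Rightarrow> ((nat \<Rightarrow> nat) \<Rightarrow> 'm::ab_group_add) \<Rightarrow> (nat \<Rightarrow> nat) \<times> int \<Rightarrow> 'm" where
  "psi r l G = (\<lambda>(\<alpha>, j). if \<alpha> \<in> multi_idx r \<and> j = int (msize r \<alpha>) - l then sg (even l) (G \<alpha>) else 0)"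

lemma psi_in: "G \<in> Gam r \<Longrightarrow> psi r l G \<in> Eell r l"
proof -
  assume G: "G \<in> Gam r"
  have sub: "fsupp (psi r l G) \<subseteq> (\<lambda>\<alpha>. (\<alpha>, int (msize r \<alpha>) - l)) ` fsupp G"
    by (auto simp: fsupp_def psi_def split: if_splits)
  have "finite (fsupp (psi r l G))"
    using G by (intro finite_subset[OF sub]) (auto simp: Gam_def)
  moreover have "fst ` fsupp (psi r l G) \<subseteq> multi_idx r"
    by (auto simp: fsupp_def psi_def split: if_splits)
  moreover have "\<forall>(\<alpha>, j)\<in>fsupp (psi r l G). int (msize r \<alpha>) = j + l"
    by (auto simp: fsupp_def psi_def split: if_splits)
  ultimately show ?thesis by (simp add: Eell_def Mg_def)
qed

lemma part_bij: "bij_betw (phi r :: _ \<Rightarrow> _ \<Rightarrow> 'm::ab_group_add) (Eell r l) (Gam r)"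
proof (rule bij_betw_byWitness[where f' = "psi r l"])
  show "\<forall>F\<in>(Eell r l :: (_ \<Rightarrow> 'm) set). psi r l (phi r F) = F"
  proof
    fix F :: "_ \<Rightarrow> 'm" assume F: "F \<in> Eell r l"
    show "psi r l (phi r F) = F"
    proof
      fix a :: "(nat \<Rightarrow> nat) \<times> int"
      obtain \<alpha> j where aa: "a = (\<alpha>, j)" by (cases a)
      show "psi r l (phi r F) a = F a"
      proof (cases "\<alpha> \<in> multi_idx r \<and> j = int (msize r \<alpha>) - l")
        case True
        then show ?thesis by (simp add: aa psi_def phi_E_apply[OF F])
      next
        case False
        have "a \<notin> fsupp F"
        proof
          assume a: "a \<in> fsupp F"
          then have "\<alpha> \<in> multi_idx r" using F aa by (force simp: Eell_def Mg_def)
          moreover have "int (msize r \<alpha>) = j + l" using F a aa by (auto simp: Eell_def)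
          ultimately show False using False by simp
        qed
        then show ?thesis using False by (auto simp: aa psi_def fsupp_def)
      qed
    qed
  qed
  show "\<forall>G\<in>(Gam r :: (_ \<Rightarrow> 'm) set). phi r (psi r l G) = G"
  proof
    fix G :: "_ \<Rightarrow> 'm" assume G: "G \<in> Gam r"
    show "phi r (psi r l G) = G"
    proof
      fix \<alpha>
      have "\<alpha> \<notin> multi_idx r \<Longrightarrow> G \<alpha> = 0" using G by (auto simp: Gam_def fsupp_def)
      then show "phi r (psi r l G) \<alpha> = G \<alpha>"
        unfolding phi_E_apply[OF psi_in[OF G]] by (auto simp: psi_def)
    qed
  qed
  show "phi r ` Eell r l \<subseteq> (Gam r :: (_ \<Rightarrow> 'm) set)"
  proof
    fix G assume "G \<in> phi r ` Eell r l"
    then obtain F where F: "F \<in> Eell r l" and G: "G = phi r F" by blast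
    have "finite (fsupp G)" using fin_phi[of r F] G by (simp add: fin_def)
    moreover have "fsupp G \<subseteq> multi_idx r"
    proof
      fix \<alpha> assume "\<alpha> \<in> fsupp G"
      then have "(\<alpha>, int (msize r \<alpha>) - l) \<in> fsupp F"
        using G by (simp add: fsupp_def phi_E_apply[OF F])
      then show "\<alpha> \<in> multi_idx r" using F by (force simp: Eell_def Mg_def)
    qed
    ultimately show "G \<in> Gam r" by (simp add: Gam_def)
  qed
  show "psi r l ` Gam r \<subseteq> (Eell r l :: (_ \<Rightarrow> 'm) set)" using psi_in by blast
qed



context
  fixes n :: nat and sm :: "'r::comm_ring_1 \<Rightarrow> 'm::ab_group_add \<Rightarrow> 'm"
    and dO :: "nat \<Rightarrow> 'r \<Rightarrow> 'r" and dM :: "nat \<Rightarrow> 'm \<Rightarrow> 'm"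
  assumes D: "Dmod n sm dO dM"
begin

lemma sm_addl: "sm (a + b) m = sm a m + sm b m" using D by (simp add: Dmod_def)
lemma sm_addr: "sm a (x + y) = sm a x + sm a y" using D by (simp add: Dmod_def)
lemma sm_zero_l[simp]: "sm 0 m = 0"
proof -
  have "sm (0 + 0) m = sm 0 m + sm 0 m" by (rule sm_addl)
  then show ?thesis by simp
qed
lemma sm_zero_r[simp]: "sm a 0 = 0"
proof -
  have "sm a (0 + 0) = sm a 0 + sm a 0" by (rule sm_addr)
  then show ?thesis by simp
qed
lemma sm_neg_r: "sm a (- x) = - sm a x"
proof -
  have "sm a (x + - x) = sm a x + sm a (- x)" by (rule sm_addr)
  then show ?thesis by (simp add: eq_neg_iff_add_eq_0 add.commute)
qed
lemma sm_neg_l: "sm (- a) x = - sm a x"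
proof -
  have "sm (a + - a) x = sm a x + sm (- a) x" by (rule sm_addl)
  then show ?thesis by (simp add: eq_neg_iff_add_eq_0 add.commute)
qed
lemma sm_diff_l: "sm (a - b) x = sm a x - sm b x"
  using sm_addl[of a "- b" x] by (simp add: sm_neg_l)
lemma sm_sum_l: "sm (\<Sum>i\<in>A. g i) x = (\<Sum>i\<in>A. sm (g i) x)"
  by (induction A rule: infinite_finite_induct) (auto simp: sm_addl)
lemma sm_sg: "sm a (sg e x) = sg e (sm a x)" by (simp add: sg_def sm_neg_r)

lemma dM_add: "i < n \<Longrightarrow> dM i (x + y) = dM i x + dM i y" using D by (simp add: Dmod_def)
lemma dM_zero: "i < n \<Longrightarrow> dM i 0 = 0"
proof -
  assume "i < n"
  then have "dM i (0 + 0) = dM i 0 + dM i 0" by (rule dM_add)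
  then show ?thesis by simp
qed
lemma dM_neg: "i < n \<Longrightarrow> dM i (- x) = - dM i x"
proof -
  assume "i < n"
  then have "dM i (x + - x) = dM i x + dM i (- x)" by (rule dM_add)
  then show ?thesis using dM_zero[OF \<open>i < n\<close>] by (simp add: eq_neg_iff_add_eq_0 add.commute)
qed
lemma dM_sg: "i < n \<Longrightarrow> dM i (sg e x) = sg e (dM i x)" by (simp add: sg_def dM_neg)

lemma addop_gh: "addop (\<lambda>\<alpha> m. mono_el \<alpha> (sm h m))"
  by (simp add: addop_def sm_addr mono_el_add)
lemma addop_gdx: "i < n \<Longrightarrow> addop (\<lambda>\<alpha> m. mono_el \<alpha> (dM i m) - (\<Sum>j<r. mono_el (incr \<alpha> j) (sm (dO i (f j)) m)))"
  by (simp add: addop_def sm_addr mono_el_add dM_add sum.distrib)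
lemma addop_gt: "addop (\<lambda>\<alpha> m. mono_el \<alpha> (sm (f i) m) - mono_el (decr \<alpha> i) (sm (of_nat (\<alpha> i)) m))"
  by (simp add: addop_def sm_addr mono_el_add)
lemma addop_gdt: "addop (\<lambda>\<alpha> m. mono_el (incr \<alpha> i) m)"
  by (simp add: addop_def mono_el_add)

lemma gh_mono: "gam_h sm h (mono_el \<alpha> y) = mono_el \<alpha> (sm h y)"
  unfolding gam_h_def by (rule lin_ext_mono[OF addop_gh])
lemma gdx_mono: "i < n \<Longrightarrow> gam_dx sm dO dM f r i (mono_el \<alpha> y) = mono_el \<alpha> (dM i y) - (\<Sum>j<r. mono_el (incr \<alpha> j) (sm (dO i (f j)) y))"
  unfolding gam_dx_def by (rule lin_ext_mono[OF addop_gdx])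
lemma gt_mono: "gam_t sm f i (mono_el \<alpha> y) = mono_el \<alpha> (sm (f i) y) - mono_el (decr \<alpha> i) (sm (of_nat (\<alpha> i)) y)"
  unfolding gam_t_def by (rule lin_ext_mono[OF addop_gt])
lemma gdt_mono: "gam_dt i (mono_el \<alpha> y) = mono_el (incr \<alpha> i) y"
  unfolding gam_dt_def by (rule lin_ext_mono[OF addop_gdt])

lemma part_h: "phi r (mg_h sm h F) = gam_h sm h (phi r F)"
proof -
  have "phi r (mg_h sm h F) = lin_ext (\<lambda>a m. phi r (mono_el a (sm h m))) F"
    unfolding mg_h_def by (rule phi_comp) simp
  also have "\<dots> = lin_ext (\<lambda>a m. gam_h sm h (phop r a m)) F"
    apply (rule lin_ext_cong)
    subgoal for a m by (cases a) (simp add: phop_def phi_mono gh_mono sm_sg)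
    done
  also have "\<dots> = gam_h sm h (phi r F)"
    unfolding gam_h_def phi_lin by (rule lin_ext_comp2[symmetric, OF addop_gh]) (simp add: phop_def)
  finally show ?thesis .
qed

lemma part_dx: "i < n \<Longrightarrow> phi r (mg_dx sm dO dM f r i F) = gam_dx sm dO dM f r i (phi r F)"
proof -
  assume i: "i < n"
  have "phi r (mg_dx sm dO dM f r i F) = lin_ext (\<lambda>a m. phi r ((\<lambda>(\<alpha>, j) m.
      mono_el (\<alpha>, j) (dM i m) - (\<Sum>l<r. mono_el (incr \<alpha> l, j + 1) (sm (dO i (f l)) m))) a m)) F"
    unfolding mg_dx_def by (rule phi_comp) (simp split: prod.split)
  also have "\<dots> = lin_ext (\<lambda>a m. gam_dx sm dO dM f r i (phop r a m)) F"
    apply (rule lin_ext_cong)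
    subgoal for a m by (cases a) (simp add: phop_def phi_mono gdx_mono[OF i] sm_sg dM_sg[OF i] phi_diff phi_sum msize_incr)
    done
  also have "\<dots> = gam_dx sm dO dM f r i (phi r F)"
    unfolding gam_dx_def phi_lin by (rule lin_ext_comp2[symmetric, OF addop_gdx[OF i]]) (simp add: phop_def)
  finally show ?thesis .
qed

lemma lin_ext_neg_op: "- lin_ext (op :: 'i \<Rightarrow> 'm0::zero \<Rightarrow> 'k \<Rightarrow> 'n::ab_group_add) F = lin_ext (\<lambda>a m. - op a m) F"
  unfolding lin_ext_def by (rule sum_negf[symmetric])

lemma gdt_add: "fin F \<Longrightarrow> fin G \<Longrightarrow> gam_dt i (F + G) = gam_dt i F + gam_dt i G"
  unfolding gam_dt_def by (rule lin_ext_add[OF addop_gdt])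
lemma gdt_diff: "fin F \<Longrightarrow> fin G \<Longrightarrow> gam_dt i (F - G) = gam_dt i F - gam_dt i G"
  unfolding gam_dt_def by (rule lin_ext_diff[OF addop_gdt])
lemma gt_add: "fin F \<Longrightarrow> fin G \<Longrightarrow> gam_t sm f i (F + G) = gam_t sm f i F + gam_t sm f i G"
  unfolding gam_t_def by (rule lin_ext_add[OF addop_gt])
lemma gh_add: "fin F \<Longrightarrow> fin G \<Longrightarrow> gam_h sm h (F + G) = gam_h sm h F + gam_h sm h G"
  unfolding gam_h_def by (rule lin_ext_add[OF addop_gh])
lemma fin_gt[simp]: "fin (gam_t sm f i F)" unfolding gam_t_def by simp
lemma fin_gdt[simp]: "fin (gam_dt i F)" unfolding gam_dt_def by simp
lemma fin_gh[simp]: "fin (gam_h sm h F)" unfolding gam_h_def by simp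

lemma phi_dxi: "phi r (mg_dxi F) = - phi r F"
proof -
  have "phi r (mg_dxi F) = lin_ext (\<lambda>a m. phi r ((\<lambda>(\<alpha>, j) m. mono_el (\<alpha>, j + 1) m) a m)) F"
    unfolding mg_dxi_def by (rule phi_comp) (simp split: prod.split)
  also have "\<dots> = lin_ext (\<lambda>a m. - phop r a m) F"
    apply (rule lin_ext_cong)
    subgoal for a m by (cases a) (simp add: phop_def phi_mono sg_def mono_el_uminus)
    done
  also have "\<dots> = - phi r F" by (simp add: lin_ext_neg_op phi_lin)
  finally show ?thesis .
qed

lemma phi_dxi_inv: "phi r (mg_dxi_inv F) = - phi r F"
proof -
  have "phi r (mg_dxi_inv F) = lin_ext (\<lambda>a m. phi r ((\<lambda>(\<alpha>, j) m. mono_el (\<alpha>, j - 1) m) a m)) F"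
    unfolding mg_dxi_inv_def by (rule phi_comp) (simp split: prod.split)
  also have "\<dots> = lin_ext (\<lambda>a m. - phop r a m) F"
    apply (rule lin_ext_cong)
    subgoal for a m by (cases a) (simp add: phop_def phi_mono sg_def mono_el_uminus)
    done
  also have "\<dots> = - phi r F" by (simp add: lin_ext_neg_op phi_lin)
  finally show ?thesis .
qed

lemma phi_dxi_iter: "phi r ((mg_dxi ^^ k) F) = (if even k then phi r F else - phi r F)"
  by (induction k) (auto simp: phi_dxi)
lemma phi_dxi_inv_iter: "phi r ((mg_dxi_inv ^^ k) F) = (if even k then phi r F else - phi r F)"
  by (induction k) (auto simp: phi_dxi_inv)

lemma part_pow: "phi r (mg_dxi_pow k F) = (if even k then phi r F else - phi r F)"
proof (cases "0 \<le> k")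
  case True
  then have "even (nat k) = even k" by (simp add: even_nat_iff)
  then show ?thesis using True by (simp add: mg_dxi_pow_def phi_dxi_iter)
next
  case False
  then have "even (nat (- k)) = even k" by (simp add: even_nat_iff)
  then show ?thesis using False by (simp add: mg_dxi_pow_def phi_dxi_inv_iter)
qed

lemma part_y: "i < r \<Longrightarrow> phi r (mg_y i F) = - gam_dt i (phi r F)"
proof -
  assume i: "i < r"
  have "phi r (mg_y i F) = lin_ext (\<lambda>a m. phi r ((\<lambda>(\<alpha>, j) m. mono_el (incr \<alpha> i, j) m) a m)) F"
    unfolding mg_y_def by (rule phi_comp) (simp split: prod.split)
  also have "\<dots> = lin_ext (\<lambda>a m. - gam_dt i (phop r a m)) F"
    apply (rule lin_ext_cong)
    subgoal for a m by (cases a) (simp add: phop_def phi_mono sg_def mono_el_uminus gdt_mono msize_incr[OF i])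
    done
  also have "\<dots> = - gam_dt i (phi r F)"
    unfolding lin_ext_neg_op[symmetric] gam_dt_def phi_lin
    by (subst lin_ext_comp2[OF addop_gdt]) (simp_all add: phop_def)
  finally show ?thesis .
qed

lemma part_dy: "i < r \<Longrightarrow> phi r (mg_dy sm f i F) = gam_t sm f i (phi r F)"
proof -
  assume i: "i < r"
  have "phi r (mg_dy sm f i F) = lin_ext (\<lambda>a m. phi r ((\<lambda>(\<alpha>, j) m.
      mono_el (decr \<alpha> i, j) (sm (of_nat (\<alpha> i)) m) - mono_el (\<alpha>, j + 1) (sm (f i) m)) a m)) F"
    unfolding mg_dy_def by (rule phi_comp) (simp split: prod.split)
  also have "\<dots> = lin_ext (\<lambda>a m. gam_t sm f i (phop r a m)) F"
  proof (rule lin_ext_cong)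
    fix a :: "(nat \<Rightarrow> nat) \<times> int" and m :: 'm
    obtain \<alpha> j where a: "a = (\<alpha>, j)" by (cases a)
    show "phi r ((\<lambda>(\<alpha>, j) m.
      mono_el (decr \<alpha> i, j) (sm (of_nat (\<alpha> i)) m) - mono_el (\<alpha>, j + 1) (sm (f i) m)) a m)
      = gam_t sm f i (phop r a m)"
    proof (cases "\<alpha> i = 0")
      case True
      then show ?thesis by (simp add: a phop_def phi_mono phi_diff gt_mono sm_sg sg_def mono_el_uminus phi_uminus sm_neg_r)
    next
      case False
      then have "msize r \<alpha> = Suc (msize r (decr \<alpha> i))" using msize_decr[OF i] by simp
      then show ?thesis by (simp add: a phop_def phi_mono phi_diff gt_mono sm_sg sg_def mono_el_uminus phi_uminus sm_neg_r)
    qed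
  qed
  also have "\<dots> = gam_t sm f i (phi r F)"
    unfolding gam_t_def phi_lin by (rule lin_ext_comp2[symmetric, OF addop_gt]) (simp add: phop_def)
  finally show ?thesis .
qed

lemma fin_mg_dy[simp]: "fin (mg_dy sm f i F)"
  unfolding mg_dy_def by (rule fin_lin_ext) (simp split: prod.split)
lemma fin_mg_y[simp]: "fin (mg_y i F)"
  unfolding mg_y_def by (rule fin_lin_ext) (simp split: prod.split)

lemma part_theta: "phi r (mg_theta sm f r F) = gam_s sm f r (phi r F)"
proof -
  have "phi r (mg_theta sm f r F) = (\<Sum>i<r. phi r (mg_y i (mg_dy sm f i F)))"
    unfolding mg_theta_def by (rule phi_sum) simp
  also have "\<dots> = (\<Sum>i<r. - gam_dt i (gam_t sm f i (phi r F)))"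
    by (rule sum.cong) (simp_all add: part_y part_dy)
  also have "\<dots> = gam_s sm f r (phi r F)"
    by (simp add: gam_s_def sum_negf)
  finally show ?thesis .
qed

lemma gs_mono: "gam_s sm f r (mono_el \<alpha> y) =
    mono_el \<alpha> (sm (of_nat (msize r \<alpha>)) y) - (\<Sum>i<r. mono_el (incr \<alpha> i) (sm (f i) y))"
proof -
  have t: "mono_el (incr (decr \<alpha> i) i) (sm (of_nat (\<alpha> i)) y) = mono_el \<alpha> (sm (of_nat (\<alpha> i)) y)" for i
    by (cases "\<alpha> i = 0") (simp_all add: incr_decr)
  have "gam_s sm f r (mono_el \<alpha> y) = - (\<Sum>i<r. mono_el (incr \<alpha> i) (sm (f i) y) - mono_el \<alpha> (sm (of_nat (\<alpha> i)) y))"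
    by (simp add: gam_s_def gt_mono gdt_diff gdt_mono t)
  also have "\<dots> = (\<Sum>i<r. mono_el \<alpha> (sm (of_nat (\<alpha> i)) y)) - (\<Sum>i<r. mono_el (incr \<alpha> i) (sm (f i) y))"
    by (simp add: sum_subtractf)
  also have "(\<Sum>i<r. mono_el \<alpha> (sm (of_nat (\<alpha> i)) y)) = mono_el \<alpha> (sm (of_nat (msize r \<alpha>)) y)"
    by (simp add: mono_el_sum[symmetric] sm_sum_l[symmetric] msize_def)
  finally show ?thesis .
qed

lemma gs_add: "fin F \<Longrightarrow> fin G \<Longrightarrow> gam_s sm f r (F + G) = gam_s sm f r F + gam_s sm f r G"
  by (simp add: gam_s_def gt_add gdt_add sum.distrib)

lemma fin_mg_xi[simp]: "fin (mg_xi sm f r F)"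
  unfolding mg_xi_def by (rule fin_lin_ext) (simp split: prod.split)

lemma s_mono:
  assumes j: "j = int (msize r \<alpha>) - l"
  shows "phi r (mg_xi sm f r (mono_el (\<alpha>, j) m)) =
    gam_s sm f r (phop r (\<alpha>, j) m) - gam_h sm (of_int l) (phop r (\<alpha>, j) m)"
proof -
  define e where "e = even (int (msize r \<alpha>) + j)"
  have e1: "even (1 + int (msize r \<alpha>) + j) = (\<not> e)" unfolding e_def by (simp; blast)
  have e2: "even (int (msize r \<alpha>) + (j - 1)) = (\<not> e)" unfolding e_def by (simp; blast)
  have xi: "mg_xi sm f r (mono_el (\<alpha>, j) m) =
      (\<Sum>l<r. mono_el (incr \<alpha> l, j) (sm (f l) m)) - mono_el (\<alpha>, j - 1) (sm (of_int j) m)"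
    unfolding mg_xi_def by (subst lin_ext_mono) (simp_all add: addop_def sm_addr mono_el_add sum.distrib split: prod.split)
  have "phi r (mg_xi sm f r (mono_el (\<alpha>, j) m)) =
      (\<Sum>i<r. mono_el (incr \<alpha> i) (sg (\<not> e) (sm (f i) m))) - mono_el \<alpha> (sg (\<not> e) (sm (of_int j) m))"
    by (simp add: xi phi_diff phi_sum phi_mono msize_incr e1 e2 del: even_add)
  also have "\<dots> = mono_el \<alpha> (sm (of_int j) (sg e m)) - (\<Sum>i<r. mono_el (incr \<alpha> i) (sm (f i) (sg e m)))"
    by (simp add: sg_neg sm_sg mono_el_uminus sum_negf)
  also have "sm (of_int j) (sg e m) = sm (of_nat (msize r \<alpha>)) (sg e m) - sm (of_int l) (sg e m)"
    by (simp add: j sm_diff_l)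
  finally have L: "phi r (mg_xi sm f r (mono_el (\<alpha>, j) m)) =
     mono_el \<alpha> (sm (of_nat (msize r \<alpha>)) (sg e m) - sm (of_int l) (sg e m)) -
     (\<Sum>i<r. mono_el (incr \<alpha> i) (sm (f i) (sg e m)))" .
  have P: "phop r (\<alpha>, j) m = mono_el \<alpha> (sg e m)" by (simp add: phop_def e_def)
  show ?thesis unfolding L P gs_mono gh_mono mono_el_diff by (rule diff_right_commute)
qed

lemma gam_s_zero: "gam_s sm f r 0 = 0"
  by (simp add: gam_s_def gam_t_def gam_dt_def)
lemma gam_h_zero: "gam_h sm h 0 = 0"
  by (simp add: gam_h_def)

lemma xi_mono: "mg_xi sm f r (mono_el a m) = (\<lambda>(\<alpha>, j) m.
      (\<Sum>l<r. mono_el (incr \<alpha> l, j) (sm (f l) m)) - mono_el (\<alpha>, j - 1) (sm (of_int j) m)) a m"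
  unfolding mg_xi_def by (subst lin_ext_mono) (simp_all add: addop_def sm_addr mono_el_add sum.distrib split: prod.split)

lemma part_s:
  assumes F: "F \<in> Eell r l"
  shows "phi r (mg_s sm f r F) = gam_s sm f r (phi r F) - gam_h sm (of_int l) (phi r F)"
proof -
  have "phi r (mg_s sm f r F) = phi r (mg_xi sm f r F)"
    by (simp add: mg_s_def phi_uminus phi_dxi)
  also have "\<dots> = lin_ext (\<lambda>a m. phi r ((\<lambda>(\<alpha>, j) m.
      (\<Sum>l<r. mono_el (incr \<alpha> l, j) (sm (f l) m)) - mono_el (\<alpha>, j - 1) (sm (of_int j) m)) a m)) F"
    unfolding mg_xi_def by (rule phi_comp) (simp split: prod.split)
  also have "\<dots> = lin_ext (\<lambda>a m. gam_s sm f r (phop r a m) - gam_h sm (of_int l) (phop r a m)) F"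
  proof (rule lin_ext_cong_supp)
    fix a assume a: "a \<in> fsupp F"
    obtain \<alpha> j where aa: "a = (\<alpha>, j)" by (cases a)
    have j: "j = int (msize r \<alpha>) - l" using F a aa by (auto simp: Eell_def)
    show "phi r ((\<lambda>(\<alpha>, j) m.
      (\<Sum>l<r. mono_el (incr \<alpha> l, j) (sm (f l) m)) - mono_el (\<alpha>, j - 1) (sm (of_int j) m)) a (F a)) =
      gam_s sm f r (phop r a (F a)) - gam_h sm (of_int l) (phop r a (F a))"
      unfolding xi_mono[symmetric] aa by (rule s_mono[OF j])
  qed
  also have "\<dots> = gam_s sm f r (phi r F) - gam_h sm (of_int l) (phi r F)"
    unfolding phi_lin
    by (rule lin_ext_comp[where P="\<lambda>G. gam_s sm f r G - gam_h sm (of_int l) G", symmetric])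
      (simp_all add: gs_add gh_add phop_def gam_s_zero gam_h_zero)
  finally show ?thesis .
qed

end

theorem proposition4p2:
  fixes n r :: nat
    and sm :: "'r::comm_ring_1 \<Rightarrow> 'm::ab_group_add \<Rightarrow> 'm"
    and dO :: "nat \<Rightarrow> 'r \<Rightarrow> 'r"
    and dM :: "nat \<Rightarrow> 'm \<Rightarrow> 'm"
    and f :: "nat \<Rightarrow> 'r"
  assumes "Dmod n sm dO dM"
  shows
    \<comment> \<open>(1) phi is D_X-linear\<close>
    "(\<forall>F\<in>Mg r. \<forall>h. phi r (mg_h sm h F) = gam_h sm h (phi r F)) \<and>
     (\<forall>F\<in>Mg r. \<forall>i<n. phi r (mg_dx sm dO dM f r i F) = gam_dx sm dO dM f r i (phi r F)) \<and>
     \<comment> \<open>(2)\<close>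
     (\<forall>k::int. \<forall>F::(nat \<Rightarrow> nat) \<times> int \<Rightarrow> 'm. F \<in> Mg r \<longrightarrow> phi r (mg_dxi_pow k F) = (if even k then phi r F else - phi r F)) \<and>
     \<comment> \<open>(3)\<close>
     (\<forall>i<r. \<forall>F::(nat \<Rightarrow> nat) \<times> int \<Rightarrow> 'm. F \<in> Mg r \<longrightarrow> phi r (mg_y i F) = - gam_dt i (phi r F)) \<and>
     \<comment> \<open>(4)\<close>
     (\<forall>i<r. \<forall>F\<in>Mg r. phi r (mg_dy sm f i F) = gam_t sm f i (phi r F)) \<and>
     \<comment> \<open>(5)\<close>
     (\<forall>F\<in>Mg r. phi r (mg_theta sm f r F) = gam_s sm f r (phi r F)) \<and>
     \<comment> \<open>(6)\<close>
     (\<forall>l::int. bij_betw (phi r) (Eell r l) (Gam r) \<and>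
        (\<forall>F\<in>Eell r l. phi r (mg_s sm f r F) =
            gam_s sm f r (phi r F) - gam_h sm (of_int l) (phi r F)))"
proof (intro conjI ballI allI impI)
  fix l :: int
  show "bij_betw (phi r) (Eell r l) (Gam r)" by (rule part_bij)
qed (simp_all add: part_h[OF assms] part_dx[OF assms] part_pow[OF assms] part_y[OF assms]
    part_dy[OF assms] part_theta[OF assms] part_s[OF assms])

end
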